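(* In the network setting of the context, suppose there is at most one $i\in\mathcal I$ with $|\mathcal J(i)|>1$. Then for every $m\ge1$ there exist positive constants $\delta,\hat\kappa$ and a positive definite matrix $Q\in\mathbb R^{I\times I}$ such that the function $\mathcal V\in C^2(\mathbb R^I)$ with $\mathcal V(x)=(x^{\mathsf T}Qx)^{m/2}$ for $|x|\ge1$ satisfies $$\mathcal L^u\mathcal V(x)\le\hat\kappa-|x|^m\qquad\forall x\in\mathcal K_{\delta,+}^c,\ \forall u\in\mathbb U,$$ where $\mathcal K_{\delta,+}=\{x\in\mathbb R^I:e\cdot x>\delta|x|\}$.
   Context: Network setting. $\mathcal I=\{1,\dots,I\}$, $\mathcal J=\{1,\dots,J\}$; $\mathcal G$ a bipartite tree on $\mathcal I\cup\mathcal J$ with edges $i\sim j$; $\mathcal J(i)=\{j:i\sim j\}$. Constants $\lambda_i>0$, $\gamma_i\ge0$, $\ell_i\in\mathbb R$; $\mu_{ij}>0$ if $i\sim j$, $\mu_{ij}=0$ otherwise. $e$ = all-ones vector, $a^\pm$ positive/negative parts. For $e\cdot\alpha=e\cdot\beta$, $G(\alpha,\beta)$ is the unique $\psi\in\mathbb R^{I\times J}$ with row sums $\alpha_i$, column sums $\beta_j$, and $\psi_{ij}=0$ for $i\not\sim j$. $\mathbb U=\{u=(u^c,u^s)\in\mathbb R^I_+\times\mathbb R^J_+:e\cdot u^c=e\cdot u^s=1\}$; $\hat G[u](x)=G(x-(e\cdot x)^+u^c,-(e\cdot x)^-u^s)$; drift $b_i(x,u)=-\sum_{j\in\mathcal J(i)}\mu_{ij}\hat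 G_{ij}[u](x)-\gamma_i(e\cdot x)^+u^c_i+\ell_i$. Controlled generator $\mathcal L^u f(x)=\sum_i\lambda_i\partial_{ii}f(x)+b(x,u)\cdot\nabla f(x)$. *)

theory Defs
  imports "HOL-Analysis.Analysis"
begin

text \<open>Customer classes are indexed by a finite type 'i, server pools by a finite type 'j.
  The edge relation E i j encodes i \<sim> j.\<close>

definition bip_adj :: "('i \<Rightarrow> 'j \<Rightarrow> bool) \<Rightarrow> ('i + 'j) \<Rightarrow> ('i + 'j) \<Rightarrow> bool" where
  "bip_adj E v w = (case (v, w) of
      (Inl i, Inr j) \<Rightarrow> E i j
    | (Inr j, Inl i) \<Rightarrow> E i j
    | _ \<Rightarrow> False)"

definition bip_tree :: "('i::finite \<Rightarrow> 'j::finite \<Rightarrow> bool) \<Rightarrow> bool" where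
  "bip_tree E \<longleftrightarrow> (\<forall>v w. (bip_adj E)\<^sup>*\<^sup>* v w)
      \<and> card {(i, j). E i j} + 1 = CARD('i) + CARD('j)"

definition esum :: "real^'n::finite \<Rightarrow> real" where
  "esum x = (\<Sum>i\<in>UNIV. x $ i)"

definition posp :: "real \<Rightarrow> real" where "posp a = max a 0"
definition negp :: "real \<Rightarrow> real" where "negp a = max (- a) 0"

definition Gmap :: "('i::finite \<Rightarrow> 'j::finite \<Rightarrow> bool) \<Rightarrow> real^'i \<Rightarrow> real^'j \<Rightarrow> ('i \<Rightarrow> 'j \<Rightarrow> real)" where
  "Gmap E \<alpha> \<beta> = (THE \<psi>. (\<forall>i. (\<Sum>j\<in>UNIV. \<psi> i j) = \<alpha> $ i)
                       \<and> (\<forall>j. (\<Sum>i\<in>UNIV. \<psi> i j) = \<beta> $ j)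
                       \<and> (\<forall>i j. \<not> E i j \<longrightarrow> \<psi> i j = 0))"

definition UU :: "((real^'i::finite) \<times> (real^'j::finite)) set" where
  "UU = {(uc, us). (\<forall>i. uc $ i \<ge> 0) \<and> (\<forall>j. us $ j \<ge> 0) \<and> esum uc = 1 \<and> esum us = 1}"

definition Ghat :: "('i::finite \<Rightarrow> 'j::finite \<Rightarrow> bool) \<Rightarrow> ((real^'i) \<times> (real^'j)) \<Rightarrow> real^'i \<Rightarrow> ('i \<Rightarrow> 'j \<Rightarrow> real)" where
  "Ghat E u x = Gmap E (x - posp (esum x) *\<^sub>R fst u) (- (negp (esum x) *\<^sub>R snd u))"

definition drift :: "('i::finite \<Rightarrow> 'j::finite \<Rightarrow> bool) \<Rightarrow> ('i \<Rightarrow> 'j \<Rightarrow> real) \<Rightarrow> ('i \<Rightarrow> real) \<Rightarrow> ('i \<Rightarrow> real)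
     \<Rightarrow> real^'i \<Rightarrow> ((real^'i) \<times> (real^'j)) \<Rightarrow> real^'i" where
  "drift E \<mu> \<gamma> ell x u = (\<chi> i. - (\<Sum>j\<in>{j. E i j}. \<mu> i j * Ghat E u x i j)
                               - \<gamma> i * posp (esum x) * fst u $ i + ell i)"

text \<open>V is C^2 with gradient DV and Hessian H (H x $ i $ k = d_k d_i V(x)).\<close>
definition C2_with :: "(real^'n::finite \<Rightarrow> real) \<Rightarrow> (real^'n \<Rightarrow> real^'n) \<Rightarrow> (real^'n \<Rightarrow> real^'n^'n) \<Rightarrow> bool" where
  "C2_with V DV H \<longleftrightarrow> (\<forall>x. (V has_derivative (\<lambda>h. DV x \<bullet> h)) (at x))
      \<and> (\<forall>x. (DV has_derivative (\<lambda>h. H x *v h)) (at x))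
      \<and> continuous_on UNIV H"

definition ctrl_gen :: "('i::finite \<Rightarrow> real) \<Rightarrow> (real^'i \<Rightarrow> 'u \<Rightarrow> real^'i)
     \<Rightarrow> (real^'i \<Rightarrow> real^'i) \<Rightarrow> (real^'i \<Rightarrow> real^'i^'i) \<Rightarrow> real^'i \<Rightarrow> 'u \<Rightarrow> real" where
  "ctrl_gen lam b DV H x u = (\<Sum>i\<in>UNIV. lam i * H x $ i $ i) + b x u \<bullet> DV x"

definition pos_def_mat :: "real^'n::finite^'n \<Rightarrow> bool" where
  "pos_def_mat Q \<longleftrightarrow> transpose Q = Q \<and> (\<forall>x. x \<noteq> 0 \<longrightarrow> x \<bullet> (Q *v x) > 0)"

end

theory Submission
  imports Defs
begin


lemma tree_has_nbr:
  assumes "bip_tree E" shows "\<exists>j. E i j"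
proof -
  have "(bip_adj E)\<^sup>*\<^sup>* (Inl i) (Inr undefined)" using assms unfolding bip_tree_def by blast
  then show ?thesis
  proof (cases rule: converse_rtranclpE)
    case base then show ?thesis by simp
  next
    case (step y) then show ?thesis
      by (cases y) (auto simp: bip_adj_def)
  qed
qed

lemma tree_struct:
  fixes E :: "'i::finite \<Rightarrow> 'j::finite \<Rightarrow> bool"
  assumes tree: "bip_tree E" and one: "card {i. card {j. E i j} > 1} \<le> 1"
  shows "\<exists>i0. (\<forall>j. E i0 j) \<and> (\<forall>i. i \<noteq> i0 \<longrightarrow> card {j. E i j} = 1)"
proof -
  define S where "S = {i. card {j. E i j} > 1}"
  define i0 where "i0 = (if S = {} then undefined else (SOME i. i \<in> S))"
  have ge1: "card {j. E i j} \<ge> 1" for i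
  proof -
    obtain j where "E i j" using tree_has_nbr[OF tree] by blast
    then have "{j. E i j} \<noteq> {}" by blast
    then show ?thesis by (simp add: Suc_leI card_gt_0_iff)
  qed
  have le1: "card {j. E i j} = 1" if "i \<noteq> i0" for i
  proof (rule ccontr)
    assume "card {j. E i j} \<noteq> 1"
    with ge1[of i] have iS: "i \<in> S" unfolding S_def by simp
    then have "S \<noteq> {}" by blast
    then have "i0 \<in> S" unfolding i0_def by (simp add: some_in_eq)
    with iS that have "{i, i0} \<subseteq> S" by blast
    then have "card {i, i0} \<le> card S" by (intro card_mono) auto
    with that one show False unfolding S_def by simp
  qed
  have "card {(i, j). E i j} = (\<Sum>i\<in>UNIV. card {j. E i j})"
  proof -
    have "{(i, j). E i j} = (SIGMA i:UNIV. {j. E i j})" by auto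
    then show ?thesis by simp
  qed
  also have "\<dots> = card {j. E i0 j} + (\<Sum>i\<in>UNIV - {i0}. card {j. E i j})"
    by (simp add: sum.remove)
  also have "(\<Sum>i\<in>UNIV - {i0}. card {j. E i j}) = (\<Sum>i\<in>UNIV - {i0}. 1)"
    using le1 by (intro sum.cong) auto
  also have "\<dots> = CARD('i) - 1" by (simp add: card_Diff_singleton)
  finally have cc: "card {(i, j). E i j} = card {j. E i0 j} + (CARD('i) - 1)" .
  have "card {j. E i0 j} = CARD('j)"
  proof -
    have "CARD('i) \<ge> 1" by (simp add: Suc_leI)
    moreover have "card {(i, j). E i j} + 1 = CARD('i) + CARD('j)" using tree unfolding bip_tree_def by blast
    ultimately show ?thesis using cc by linarith
  qed
  then have "{j. E i0 j} = UNIV" by (simp add: card_eq_UNIV_imp_eq_UNIV)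
  then show ?thesis using le1 by blast
qed


locale net =
  fixes E :: "'i::finite \<Rightarrow> 'j::finite \<Rightarrow> bool" and i0 :: 'i
  assumes full: "\<forall>j. E i0 j" and single: "\<forall>i. i \<noteq> i0 \<longrightarrow> card {j. E i j} = 1"
begin

definition p :: "'i \<Rightarrow> 'j" where "p i = (SOME j. E i j)"

lemma E_iff: assumes "i \<noteq> i0" shows "E i j \<longleftrightarrow> j = p i"
proof -
  from single assms have "card {j. E i j} = 1" by blast
  then obtain j0 where j0: "{j. E i j} = {j0}" by (rule card_1_singletonE)
  then have "E i j0" by blast
  then have "E i (p i)" unfolding p_def by (rule someI)
  with j0 show ?thesis by (metis (mono_tags) mem_Collect_eq singletonD singletonI)
qed

abbreviation N where "N \<equiv> UNIV - {i0}"

definition Gexp :: "real^'i \<Rightarrow> real^'j \<Rightarrow> 'i \<Rightarrow> 'j \<Rightarrow> real" where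
  "Gexp \<alpha> \<beta> = (\<lambda>i j. if i = i0 then \<beta>$j - (\<Sum>k\<in>N. if p k = j then \<alpha>$k else 0)
                      else (if j = p i then \<alpha>$i else 0))"

lemma esum_split: "esum x = x$i0 + (\<Sum>k\<in>N. x$k)"
  unfolding esum_def by (simp add: sum.remove)

lemma Gmap_eq:
  assumes bal: "esum \<alpha> = esum \<beta>"
  shows "Gmap E \<alpha> \<beta> = Gexp \<alpha> \<beta>"
  unfolding Gmap_def
proof (rule the_equality)
  let ?g = "Gexp \<alpha> \<beta>"
  have swap: "(\<Sum>j\<in>UNIV. \<Sum>k\<in>N. if p k = j then \<alpha>$k else 0) = (\<Sum>k\<in>N. \<alpha>$k)"
    by (subst sum.swap) simp
  have rows: "(\<Sum>j\<in>UNIV. ?g i j) = \<alpha> $ i" for i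
  proof (cases "i = i0")
    case True
    have "(\<Sum>j\<in>UNIV. ?g i j) = esum \<beta> - (\<Sum>k\<in>N. \<alpha>$k)"
      using True unfolding Gexp_def esum_def by (simp add: sum_subtractf swap)
    then show ?thesis using bal esum_split[of \<alpha>] True by simp
  next
    case False then show ?thesis unfolding Gexp_def by simp
  qed
  have cols: "(\<Sum>i\<in>UNIV. ?g i j) = \<beta> $ j" for j
  proof -
    have "(\<Sum>i\<in>UNIV. ?g i j) = ?g i0 j + (\<Sum>i\<in>N. ?g i j)" by (simp add: sum.remove)
    also have "(\<Sum>i\<in>N. ?g i j) = (\<Sum>k\<in>N. if p k = j then \<alpha>$k else 0)"
      unfolding Gexp_def by (intro sum.cong) auto
    finally show ?thesis unfolding Gexp_def by simp
  qed
  have supp: "\<not> E i j \<longrightarrow> ?g i j = 0" for i j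
    using full E_iff unfolding Gexp_def by auto
  show "(\<forall>i. (\<Sum>j\<in>UNIV. ?g i j) = \<alpha> $ i) \<and> (\<forall>j. (\<Sum>i\<in>UNIV. ?g i j) = \<beta> $ j) \<and> (\<forall>i j. \<not> E i j \<longrightarrow> ?g i j = 0)"
    using rows cols supp by blast
next
  fix \<psi> assume H: "(\<forall>i. (\<Sum>j\<in>UNIV. \<psi> i j) = \<alpha> $ i) \<and> (\<forall>j. (\<Sum>i\<in>UNIV. \<psi> i j) = \<beta> $ j) \<and> (\<forall>i j. \<not> E i j \<longrightarrow> \<psi> i j = 0)"
  have offi: "\<psi> i j = (if j = p i then \<alpha>$i else 0)" if "i \<noteq> i0" for i j
  proof -
    have z: "\<psi> i j' = 0" if "j' \<noteq> p i" for j' using H E_iff \<open>i \<noteq> i0\<close> that by blast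
    have "(\<Sum>j\<in>UNIV. \<psi> i j) = \<psi> i (p i)"
      by (subst sum.remove[of _ "p i"]) (auto simp: z)
    then have "\<psi> i (p i) = \<alpha>$i" using H by simp
    then show ?thesis using z by auto
  qed
  have oni: "\<psi> i0 j = \<beta>$j - (\<Sum>k\<in>N. if p k = j then \<alpha>$k else 0)" for j
  proof -
    have "\<beta>$j = (\<Sum>i\<in>UNIV. \<psi> i j)" using H by simp
    also have "\<dots> = \<psi> i0 j + (\<Sum>i\<in>N. \<psi> i j)" by (simp add: sum.remove)
    also have "(\<Sum>i\<in>N. \<psi> i j) = (\<Sum>k\<in>N. if p k = j then \<alpha>$k else 0)"
      using offi by (intro sum.cong) auto
    finally show ?thesis by simp
  qed
  show "\<psi> = Gexp \<alpha> \<beta>" unfolding Gexp_def using offi oni by (intro ext) auto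
qed

end


lemma esum_diff: "esum (a - b) = esum a - esum b" unfolding esum_def by (simp add: sum_subtractf)
lemma esum_scale: "esum (c *\<^sub>R a) = c * esum a" unfolding esum_def by (simp add: sum_distrib_left)
lemma esum_uminus: "esum (- a) = - esum a" unfolding esum_def by (simp add: sum_negf)

context net begin

lemma Ghat_eq:
  assumes u: "u \<in> UU"
  shows "Ghat E u x = Gexp (x - posp (esum x) *\<^sub>R fst u) (- (negp (esum x) *\<^sub>R snd u))"
proof -
  have "esum (fst u) = 1" "esum (snd u) = 1" using u unfolding UU_def by auto
  then have "esum (x - posp (esum x) *\<^sub>R fst u) = esum (- (negp (esum x) *\<^sub>R snd u))"
    by (simp add: esum_diff esum_scale esum_uminus posp_def negp_def)
  then show ?thesis unfolding Ghat_def by (simp add: Gmap_eq)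
qed

lemma drift_off:
  assumes u: "u \<in> UU" and i: "i \<noteq> i0"
  shows "drift E \<mu> \<gamma> ell x u $ i = - \<mu> i (p i) * (x$i - posp (esum x) * fst u $ i)
            - \<gamma> i * posp (esum x) * fst u $ i + ell i"
proof -
  have "{j. E i j} = {p i}" using E_iff[OF i] by auto
  then show ?thesis unfolding drift_def using i by (simp add: Ghat_eq[OF u] Gexp_def)
qed

lemma drift_on:
  assumes u: "u \<in> UU"
  shows "drift E \<mu> \<gamma> ell x u $ i0 = negp (esum x) * (\<Sum>j\<in>UNIV. \<mu> i0 j * snd u $ j)
            + (\<Sum>k\<in>N. \<mu> i0 (p k) * (x$k - posp (esum x) * fst u $ k))
            - \<gamma> i0 * posp (esum x) * fst u $ i0 + ell i0"
proof -
  define a where "a = x - posp (esum x) *\<^sub>R fst u"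
  define sn where "sn = negp (esum x)"
  have "{j. E i0 j} = UNIV" using full by auto
  then have "(\<Sum>j\<in>{j. E i0 j}. \<mu> i0 j * Ghat E u x i0 j)
      = (\<Sum>j\<in>UNIV. \<mu> i0 j * (- sn * snd u $ j - (\<Sum>k\<in>N. if p k = j then a$k else 0)))"
    unfolding a_def sn_def by (simp add: Ghat_eq[OF u] Gexp_def)
  also have "\<dots> = - sn * (\<Sum>j\<in>UNIV. \<mu> i0 j * snd u $ j)
       - (\<Sum>j\<in>UNIV. \<Sum>k\<in>N. if p k = j then \<mu> i0 j * a$k else 0)"
    by (simp add: algebra_simps sum_subtractf sum_distrib_left sum_negf if_distrib cong: if_cong)
  also have "(\<Sum>j\<in>UNIV. \<Sum>k\<in>N. if p k = j then \<mu> i0 j * a$k else 0) = (\<Sum>k\<in>N. \<mu> i0 (p k) * a$k)"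
    by (subst sum.swap) (simp add: if_distrib[symmetric] eq_commute)
  finally show ?thesis unfolding drift_def by (simp add: a_def sn_def)
qed

end


lemma prod_le: fixes x y B :: real shows "\<bar>y\<bar> \<le> B \<Longrightarrow> x*y \<le> \<bar>x\<bar>*B"
proof -
  assume h: "\<bar>y\<bar> \<le> B"
  have "x*y \<le> \<bar>x*y\<bar>" by (rule abs_ge_self)
  also have "\<dots> = \<bar>x\<bar>*\<bar>y\<bar>" by (rule abs_mult)
  also have "\<dots> \<le> \<bar>x\<bar>*B" using h by (intro mult_left_mono) auto
  finally show ?thesis .
qed

lemma keyineq:
  fixes s a A T1 T2 G L R3 R4 R5 K \<eta> Dm \<mu>m \<kappa>0 L1 Lm Mg :: real
  assumes a0: "a \<ge> 0" and mum: "\<mu>m > 0" and A: "A \<ge> \<mu>m" and T1: "\<bar>T1\<bar> \<le> Dm*a" and T2: "\<bar>T2\<bar> \<le> Dm"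
    and G: "G \<ge> 0" and L: "\<bar>L\<bar> \<le> L1" and K0: "K \<ge> 0" and R3: "K*R3 \<ge> \<kappa>0 * a^2"
    and k0: "\<kappa>0 \<ge> Dm^2/(2*\<mu>m) + 2" and R4: "\<bar>R4\<bar> \<le> Mg*a" and R5: "\<bar>R5\<bar> \<le> Lm*a"
    and eta: "0 < \<eta>" "\<eta> \<le> 1" "\<eta>*(2*Dm + K*Mg) \<le> 1" and reg: "s > 0 \<longrightarrow> s \<le> \<eta>*a"
    and Dm: "Dm \<ge> 0" and Mg: "Mg \<ge> 0" and Lmp: "Lm \<ge> 0"
  shows "s*(max (-s) 0 * A + T1 - max s 0 * T2 - max s 0 * G + L) + K*(-R3 + max s 0 * R4 + R5)
     \<le> -(min (\<mu>m/2) (1/2))*(s^2+a^2) + (L1 + K*Lm)*(\<bar>s\<bar> + a)"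
proof -
  let ?c = "min (\<mu>m/2) (1/2)"
  have sL: "s*L \<le> L1*\<bar>s\<bar>" using prod_le[OF L, of s] by (simp add: mult.commute)
  have KR5: "K*R5 \<le> K*Lm*a"
  proof -
    have "K*R5 \<le> K*\<bar>R5\<bar>" using K0 by (simp add: mult_left_mono)
    also have "\<dots> \<le> K*(Lm*a)" using K0 R5 by (simp add: mult_left_mono)
    finally show ?thesis by simp
  qed
  have Kc: "-(K*R3) \<le> -(\<kappa>0*a^2)" using R3 by simp
  have L1a: "0 \<le> L1" using L by linarith
  have Lm0: "0 \<le> Lm*a" using R5 by linarith
  show ?thesis
  proof (cases "s > 0")
    case False
    then have ms: "max s 0 = 0" "max (-s) 0 = -s" by auto
    have sT1: "s*T1 \<le> \<bar>s\<bar>*(Dm*a)" by (rule prod_le[OF T1])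
    have amgm: "\<bar>s\<bar>*(Dm*a) \<le> (\<mu>m/2)* s^2 + Dm^2/(2*\<mu>m)*a^2"
    proof -
      have "0 \<le> (\<mu>m*\<bar>s\<bar> - Dm*a)^2" by simp
      then have "2*\<mu>m*(\<bar>s\<bar>*(Dm*a)) \<le> \<mu>m^2* s^2 + Dm^2*a^2"
        by (simp add: power2_eq_square algebra_simps)
      then have "\<bar>s\<bar>*(Dm*a) \<le> (\<mu>m^2* s^2 + Dm^2*a^2)/(2*\<mu>m)" using mum by (simp add: field_simps)
      also have "\<dots> = (\<mu>m/2)* s^2 + Dm^2/(2*\<mu>m)*a^2" using mum by (simp add: field_simps power2_eq_square)
      finally show ?thesis .
    qed
    have sA: "s*(-s*A) \<le> -\<mu>m* s^2"
    proof -
      have "\<mu>m*(s* s) \<le> A*(s* s)" using A by (intro mult_right_mono) auto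
      then show ?thesis by (simp add: power2_eq_square algebra_simps)
    qed
    have lhs: "s*(max (-s) 0 * A + T1 - max s 0 * T2 - max s 0 * G + L) + K*(-R3 + max s 0 * R4 + R5)
       = s*(-s*A) + s*T1 + s*L - K*R3 + K*R5" unfolding ms by (simp add: algebra_simps)
    have "\<dots> \<le> -\<mu>m* s^2 + ((\<mu>m/2)* s^2 + Dm^2/(2*\<mu>m)*a^2) + L1*\<bar>s\<bar> - \<kappa>0*a^2 + K*Lm*a"
      using sA sT1 amgm sL Kc KR5 by linarith
    also have "\<dots> \<le> -(\<mu>m/2)* s^2 - 2*a^2 + L1*\<bar>s\<bar> + K*Lm*a"
      using k0 mult_right_mono[OF k0, of "a^2"] by (simp add: algebra_simps)
    also have "\<dots> \<le> -?c*(s^2+a^2) + (L1 + K*Lm)*(\<bar>s\<bar> + a)"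
    proof -
      have "?c* s^2 \<le> (\<mu>m/2)* s^2" by (intro mult_right_mono) auto
      moreover have "?c*a^2 \<le> 2*a^2" by (intro mult_right_mono) auto
      moreover have "0 \<le> L1*a" using L1a a0 by simp
      moreover have "0 \<le> K*Lm*\<bar>s\<bar>" using K0 Lmp by simp
      ultimately show ?thesis by (simp add: algebra_simps)
    qed
    finally show ?thesis using lhs by simp
  next
    case True
    then have ms: "max s 0 = s" "max (-s) 0 = 0" by auto
    have sle: "s \<le> \<eta>*a" using reg True by simp
    have sa: "s*a \<le> \<eta>*a^2" using mult_right_mono[OF sle a0] by (simp add: power2_eq_square)
    have ss: "s^2 \<le> \<eta>*a^2"
    proof -
      have "s* s \<le> (\<eta>*a)*(\<eta>*a)" using sle True by (intro mult_mono) auto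
      also have "\<dots> = \<eta>*(\<eta>*a^2)" by (simp add: power2_eq_square)
      also have "\<dots> \<le> 1*(\<eta>*a^2)" using eta by (intro mult_right_mono) auto
      finally show ?thesis by (simp add: power2_eq_square)
    qed
    have sT1: "s*T1 \<le> Dm*(s*a)" using prod_le[OF T1, of s] True by (simp add: algebra_simps)
    have sT2: "-(s*(s*T2)) \<le> Dm* s^2"
    proof -
      have "(s* s)*(-T2) \<le> \<bar>s* s\<bar>*Dm" using T2 by (intro prod_le) simp
      then show ?thesis by (simp add: power2_eq_square algebra_simps)
    qed
    have sG: "-(s*(s*G)) \<le> 0" using G True by (simp add: mult_nonneg_nonneg)
    have sR4: "K*(s*R4) \<le> K*Mg*(s*a)"
    proof -
      have "s*R4 \<le> s*(Mg*a)" using R4 True by (intro mult_left_mono) auto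
      then show ?thesis using K0 by (metis mult_left_mono mult.assoc mult.left_commute)
    qed
    have lhs: "s*(max (-s) 0 * A + T1 - max s 0 * T2 - max s 0 * G + L) + K*(-R3 + max s 0 * R4 + R5)
       = s*T1 - s*(s*T2) - s*(s*G) + s*L - K*R3 + K*(s*R4) + K*R5" unfolding ms by (simp add: algebra_simps)
    have e1: "s*T1 - s*(s*T2) - s*(s*G) + s*L - K*R3 + K*(s*R4) + K*R5 \<le> Dm*(s*a) + Dm* s^2 + L1*\<bar>s\<bar> - \<kappa>0*a^2 + K*Mg*(s*a) + K*Lm*a"
      using sT1 sT2 sG sL Kc sR4 KR5 by linarith
    have e2: "Dm*(s*a) + Dm* s^2 + K*Mg*(s*a) \<le> a^2"
    proof -
      have "Dm*(s*a) \<le> Dm*(\<eta>*a^2)" using sa Dm by (rule mult_left_mono)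
      moreover have "Dm* s^2 \<le> Dm*(\<eta>*a^2)" using ss Dm by (rule mult_left_mono)
      moreover have "K*Mg*(s*a) \<le> K*Mg*(\<eta>*a^2)" using sa K0 Mg by (intro mult_left_mono) auto
      moreover have "(\<eta>*(2*Dm + K*Mg))*a^2 \<le> 1*a^2" using eta by (intro mult_right_mono) auto
      ultimately show ?thesis by (simp add: algebra_simps)
    qed
    have k2: "\<kappa>0*a^2 \<ge> 2*a^2"
    proof -
      have "Dm^2/(2*\<mu>m) \<ge> 0" using mum by simp
      then have "\<kappa>0 \<ge> 2" using k0 by linarith
      then show ?thesis by (intro mult_right_mono) auto
    qed
    have s2a: "s^2 \<le> a^2" using ss eta mult_right_mono[of \<eta> 1 "a^2"] by simp
    have c1: "?c*(s^2+a^2) \<le> a^2"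
    proof -
      have "?c*(s^2+a^2) \<le> (1/2)*(s^2+a^2)" by (intro mult_right_mono) auto
      then show ?thesis using s2a by simp
    qed
    have "0 \<le> L1*a" using L1a a0 by simp
    moreover have "0 \<le> K*Lm*\<bar>s\<bar>" using K0 Lmp by simp
    ultimately show ?thesis using lhs e1 e2 k2 c1 by (simp add: algebra_simps)
  qed
qed


lemma abs_sum_prod_le:
  fixes f g :: "'a \<Rightarrow> real"
  assumes "finite A"
  shows "\<bar>\<Sum>k\<in>A. f k * g k\<bar> \<le> (\<Sum>k\<in>A. \<bar>f k\<bar>) * (\<Sum>k\<in>A. \<bar>g k\<bar>)"
proof -
  have "\<bar>\<Sum>k\<in>A. f k * g k\<bar> \<le> (\<Sum>k\<in>A. \<bar>f k\<bar> * \<bar>g k\<bar>)"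
    unfolding abs_mult[symmetric] by (rule sum_abs)
  also have "\<dots> \<le> (\<Sum>k\<in>A. \<bar>f k\<bar> * (\<Sum>k\<in>A. \<bar>g k\<bar>))"
    by (intro sum_mono mult_left_mono member_le_sum) (auto simp: assms)
  also have "\<dots> = (\<Sum>k\<in>A. \<bar>f k\<bar>) * (\<Sum>k\<in>A. \<bar>g k\<bar>)" by (simp add: sum_distrib_right)
  finally show ?thesis .
qed

locale net2 = net E i0 for E :: "'i::finite \<Rightarrow> 'j::finite \<Rightarrow> bool" and i0 +
  fixes \<mu> :: "'i \<Rightarrow> 'j \<Rightarrow> real" and \<gamma> ell :: "'i \<Rightarrow> real"
  assumes mu_pos: "\<forall>i j. E i j \<longrightarrow> \<mu> i j > 0" and gam: "\<forall>i. \<gamma> i \<ge> 0"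
begin

abbreviation b where "b \<equiv> drift E \<mu> \<gamma> ell"

definition q0 :: "real \<Rightarrow> real^'i \<Rightarrow> real^'i" where
  "q0 K x = (\<chi> i. esum x + (if i = i0 then 0 else K * x$i))"

definition d where "d k = \<mu> i0 (p k) - \<mu> k (p k)"

lemma bq_expr:
  fixes x :: "real^'i" and u :: "(real^'i) \<times> (real^'j)"
  assumes u: "u \<in> UU"
  defines "s \<equiv> esum x" and "uc \<equiv> fst u" and "us \<equiv> snd u"
  shows "b x u \<bullet> q0 K x =
    s*(max (-s) 0 * (\<Sum>j\<in>UNIV. \<mu> i0 j * us$j) + (\<Sum>k\<in>N. d k * x$k) - max s 0 * (\<Sum>k\<in>N. d k * uc$k)
       - max s 0 * (\<Sum>i\<in>UNIV. \<gamma> i * uc$i) + (\<Sum>i\<in>UNIV. ell i))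
    + K*(-(\<Sum>k\<in>N. \<mu> k (p k) * (x$k)^2) + max s 0 * (\<Sum>k\<in>N. ((\<mu> k (p k) - \<gamma> k) * uc$k) * x$k)
       + (\<Sum>k\<in>N. ell k * x$k))"
proof -
  let ?sp = "max s 0" and ?sn = "max (-s) 0"
  have bo: "b x u $ k = - \<mu> k (p k) * (x$k - ?sp * uc$k) - \<gamma> k * ?sp * uc$k + ell k" if "k \<in> N" for k
    using drift_off[OF u, where x=x and i=k and \<mu>=\<mu> and \<gamma>=\<gamma> and ell=ell] that unfolding s_def uc_def posp_def by simp
  have bi: "b x u $ i0 = ?sn * (\<Sum>j\<in>UNIV. \<mu> i0 j * us$j)
            + (\<Sum>k\<in>N. \<mu> i0 (p k) * (x$k - ?sp * uc$k)) - \<gamma> i0 * ?sp * uc$i0 + ell i0"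
    using drift_on[OF u, where x=x and \<mu>=\<mu> and \<gamma>=\<gamma> and ell=ell] unfolding s_def uc_def us_def posp_def negp_def by simp
  have "b x u \<bullet> q0 K x = b x u $ i0 * s + (\<Sum>k\<in>N. b x u $ k * (s + K * x$k))"
    unfolding inner_vec_def q0_def s_def
    by (subst sum.remove[of UNIV i0]) (auto intro!: sum.cong)
  also have "\<dots> = s * (b x u $ i0 + (\<Sum>k\<in>N. b x u $ k)) + K * (\<Sum>k\<in>N. b x u $ k * x$k)"
    by (simp add: algebra_simps sum.distrib sum_distrib_left sum_distrib_right)
  also have "(\<Sum>k\<in>N. b x u $ k) + (\<Sum>k\<in>N. \<mu> i0 (p k) * (x$k - ?sp * uc$k))
      = (\<Sum>k\<in>N. d k * x$k - ?sp * (d k * uc$k) - ?sp * (\<gamma> k * uc$k) + ell k)"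
    unfolding sum.distrib[symmetric] by (intro sum.cong) (auto simp: bo d_def algebra_simps)
  then have "b x u $ i0 + (\<Sum>k\<in>N. b x u $ k) = ?sn * (\<Sum>j\<in>UNIV. \<mu> i0 j * us$j) + (\<Sum>k\<in>N. d k * x$k) - ?sp * (\<Sum>k\<in>N. d k * uc$k)
       - ?sp * (\<Sum>i\<in>UNIV. \<gamma> i * uc$i) + (\<Sum>i\<in>UNIV. ell i)"
    unfolding bi by (simp add: sum.remove[of UNIV i0] sum.distrib sum_subtractf sum_distrib_left algebra_simps)
  also have "(\<Sum>k\<in>N. b x u $ k * x$k) = -(\<Sum>k\<in>N. \<mu> k (p k) * (x$k)^2) + ?sp * (\<Sum>k\<in>N. ((\<mu> k (p k) - \<gamma> k) * uc$k) * x$k)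
       + (\<Sum>k\<in>N. ell k * x$k)"
  proof -
    have "(\<Sum>k\<in>N. b x u $ k * x$k) = (\<Sum>k\<in>N. -(\<mu> k (p k) * (x$k)^2) + ?sp * (((\<mu> k (p k) - \<gamma> k) * uc$k) * x$k) + ell k * x$k)"
      by (intro sum.cong) (auto simp: bo algebra_simps power2_eq_square)
    then show ?thesis by (simp add: sum.distrib sum_negf sum_distrib_left sum_subtractf)
  qed
  finally show ?thesis by simp
qed

end


context net2 begin

definition "\<mu>m = Min (range (\<mu> i0))"
definition "\<mu>' = Min (insert 1 ((\<lambda>k. \<mu> k (p k)) ` N))"
definition "Dm = (\<Sum>k\<in>N. \<bar>d k\<bar>)"
definition "Mg = (\<Sum>k\<in>N. \<bar>\<mu> k (p k) - \<gamma> k\<bar>)"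
definition "Lm = (\<Sum>k\<in>N. \<bar>ell k\<bar>)"
definition "L1 = \<bar>\<Sum>i\<in>UNIV. ell i\<bar>"
definition "nI = real CARD('i)"
definition "\<kappa>0 = Dm^2/(2*\<mu>m) + 2 + \<mu>'"
definition "K = \<kappa>0 * nI / \<mu>'"
definition "\<eta> = 1/(1 + 2*Dm + K*Mg)"
definition "\<delta> = \<eta>/4"
definition "cc = min (\<mu>m/2) (1/2)"

lemma mum_pos: "\<mu>m > 0"
proof -
  have "\<mu>m \<in> range (\<mu> i0)" unfolding \<mu>m_def by (rule Min_in) auto
  then show ?thesis using mu_pos full by auto
qed

lemma mum_le: "\<mu>m \<le> \<mu> i0 j" unfolding \<mu>m_def by (rule Min_le) auto

lemma mu'_pos: "\<mu>' > 0"
proof -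
  have "\<mu>' \<in> insert 1 ((\<lambda>k. \<mu> k (p k)) ` N)" unfolding \<mu>'_def by (rule Min_in) auto
  moreover have "\<mu> k (p k) > 0" if "k \<in> N" for k using mu_pos E_iff[of k "p k"] that by auto
  ultimately show ?thesis by fastforce
qed

lemma mu'_le: "k \<in> N \<Longrightarrow> \<mu>' \<le> \<mu> k (p k)" unfolding \<mu>'_def by (rule Min_le) auto

lemma nI_ge1: "nI \<ge> 1" unfolding nI_def by (simp add: Suc_leI)

lemma consts_nonneg: "Dm \<ge> 0" "Mg \<ge> 0" "Lm \<ge> 0" "L1 \<ge> 0"
  unfolding Dm_def Mg_def Lm_def L1_def by (auto intro: sum_nonneg)

lemma kappa0_ge: "\<kappa>0 \<ge> Dm^2/(2*\<mu>m) + 2" unfolding \<kappa>0_def using mu'_pos by simp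

lemma kappa0_nonneg: "\<kappa>0 \<ge> 0"
proof -
  have "Dm^2/(2*\<mu>m) \<ge> 0" using mum_pos by simp
  then show ?thesis using kappa0_ge by linarith
qed

lemma K_ge: "K \<ge> nI"
proof -
  have "\<kappa>0 \<ge> \<mu>'" unfolding \<kappa>0_def using mum_pos by simp
  then have "\<kappa>0 / \<mu>' \<ge> 1" using mu'_pos by simp
  then have "nI * (\<kappa>0 / \<mu>') \<ge> nI * 1" using nI_ge1 by (intro mult_left_mono) auto
  then show ?thesis unfolding K_def by (simp add: mult.commute)
qed

lemma K_pos: "K \<ge> 1" using K_ge nI_ge1 by simp

lemma eta_props: "0 < \<eta>" "\<eta> \<le> 1" "\<eta>*(2*Dm + K*Mg) \<le> 1"
proof -
  have p: "2*Dm + K*Mg \<ge> 0" using consts_nonneg K_pos by simp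
  then show "0 < \<eta>" "\<eta> \<le> 1" unfolding \<eta>_def by auto
  show "\<eta>*(2*Dm + K*Mg) \<le> 1" unfolding \<eta>_def using p by (simp add: field_simps)
qed

lemma delta_pos: "\<delta> > 0" unfolding \<delta>_def using eta_props by simp

lemma norm_le_s_a: fixes x :: "real^'i" shows "norm x \<le> \<bar>esum x\<bar> + 2 * (\<Sum>k\<in>N. \<bar>x$k\<bar>)"
proof -
  have "norm x \<le> (\<Sum>i\<in>UNIV. \<bar>x$i\<bar>)" by (rule norm_le_l1_cart)
  also have "\<dots> = \<bar>x$i0\<bar> + (\<Sum>k\<in>N. \<bar>x$k\<bar>)" by (simp add: sum.remove)
  also have "\<bar>x$i0\<bar> \<le> \<bar>esum x\<bar> + (\<Sum>k\<in>N. \<bar>x$k\<bar>)"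
  proof -
    have "x$i0 = esum x - (\<Sum>k\<in>N. x$k)" using esum_split[of x] by simp
    moreover have "\<bar>\<Sum>k\<in>N. x$k\<bar> \<le> (\<Sum>k\<in>N. \<bar>x$k\<bar>)" by (rule sum_abs)
    ultimately show ?thesis by linarith
  qed
  finally show ?thesis by simp
qed

lemma sum_abs_le_nI: fixes x :: "real^'i" shows "(\<Sum>i\<in>A. \<bar>x$i\<bar>) \<le> nI * norm x"
proof -
  have "(\<Sum>i\<in>A. \<bar>x$i\<bar>) \<le> (\<Sum>i\<in>UNIV. \<bar>x$i\<bar>)" by (intro sum_mono2) auto
  also have "\<dots> \<le> (\<Sum>i\<in>(UNIV::'i set). norm x)" by (intro sum_mono component_le_norm_cart)
  finally show ?thesis unfolding nI_def by simp
qed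

lemma abs_esum_le: fixes x :: "real^'i" shows "\<bar>esum x\<bar> \<le> nI * norm x"
  unfolding esum_def using sum_abs[of "\<lambda>i. x$i" UNIV] sum_abs_le_nI[of x UNIV] by linarith

lemma a2_le: fixes x :: "real^'i" shows "(\<Sum>k\<in>N. \<bar>x$k\<bar>)^2 \<le> nI * (\<Sum>k\<in>N. (x$k)^2)"
proof -
  have "(\<Sum>k\<in>N. \<bar>x$k\<bar>)^2 \<le> (\<Sum>k\<in>N. \<bar>x$k\<bar>^2) * card N" by (rule sum_squared_le_sum_of_squares)
  also have "\<dots> \<le> (\<Sum>k\<in>N. (x$k)^2) * nI"
  proof -
    have "card N \<le> CARD('i)" by (rule card_mono) auto
    then show ?thesis unfolding nI_def power2_abs by (intro mult_left_mono) (auto intro: sum_nonneg)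
  qed
  finally show ?thesis by (simp add: mult.commute)
qed

lemma drift_bound:
  fixes x :: "real^'i"
  assumes u: "u \<in> UU" and reg: "\<not> (esum x > \<delta> * norm x)"
  shows "b x u \<bullet> q0 K x \<le> -cc*((esum x)^2+(\<Sum>k\<in>N. \<bar>x$k\<bar>)^2) + (L1 + K*Lm)*(\<bar>esum x\<bar> + (\<Sum>k\<in>N. \<bar>x$k\<bar>))"
proof -
  define s where "s = esum x"
  define a where "a = (\<Sum>k\<in>N. \<bar>x$k\<bar>)"
  define uc where "uc = fst u"
  define us where "us = snd u"
  have ucp: "\<forall>i. uc$i \<ge> 0" "esum uc = 1" "\<forall>j. us$j \<ge> 0" "esum us = 1"
    using u unfolding UU_def uc_def us_def by auto
  have uc1: "(\<Sum>k\<in>N. \<bar>uc$k\<bar>) \<le> 1"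
  proof -
    have "(\<Sum>k\<in>N. \<bar>uc$k\<bar>) \<le> (\<Sum>k\<in>UNIV. \<bar>uc$k\<bar>)" by (intro sum_mono2) auto
    also have "\<dots> = 1" using ucp unfolding esum_def by simp
    finally show ?thesis .
  qed
  have a0: "a \<ge> 0" unfolding a_def by (auto intro: sum_nonneg)
  have A: "(\<Sum>j\<in>UNIV. \<mu> i0 j * us$j) \<ge> \<mu>m"
  proof -
    have "(\<Sum>j\<in>UNIV. \<mu>m * us$j) \<le> (\<Sum>j\<in>UNIV. \<mu> i0 j * us$j)"
      using ucp mum_le by (intro sum_mono mult_right_mono) auto
    moreover have "(\<Sum>j\<in>UNIV. \<mu>m * us$j) = \<mu>m" using ucp unfolding esum_def by (simp add: sum_distrib_left[symmetric])
    ultimately show ?thesis by simp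
  qed
  have T1: "\<bar>\<Sum>k\<in>N. d k * x$k\<bar> \<le> Dm * a"
    unfolding Dm_def a_def by (rule abs_sum_prod_le) simp
  have T2: "\<bar>\<Sum>k\<in>N. d k * uc$k\<bar> \<le> Dm"
  proof -
    have "\<bar>\<Sum>k\<in>N. d k * uc$k\<bar> \<le> Dm * (\<Sum>k\<in>N. \<bar>uc$k\<bar>)" unfolding Dm_def by (rule abs_sum_prod_le) simp
    also have "\<dots> \<le> Dm * 1" using uc1 consts_nonneg by (intro mult_left_mono) auto
    finally show ?thesis by simp
  qed
  have G: "(\<Sum>i\<in>UNIV. \<gamma> i * uc$i) \<ge> 0" using gam ucp by (intro sum_nonneg) auto
  have L: "\<bar>\<Sum>i\<in>UNIV. ell i\<bar> \<le> L1" unfolding L1_def by simp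
  have R3: "K * (\<Sum>k\<in>N. \<mu> k (p k) * (x$k)^2) \<ge> \<kappa>0 * a^2"
  proof -
    have "\<mu>' * (\<Sum>k\<in>N. (x$k)^2) \<le> (\<Sum>k\<in>N. \<mu> k (p k) * (x$k)^2)"
      unfolding sum_distrib_left using mu'_le by (intro sum_mono mult_right_mono) auto
    then have "K * (\<mu>' * (\<Sum>k\<in>N. (x$k)^2)) \<le> K * (\<Sum>k\<in>N. \<mu> k (p k) * (x$k)^2)"
      using K_pos by (intro mult_left_mono) auto
    moreover have "K * \<mu>' = \<kappa>0 * nI" unfolding K_def using mu'_pos by simp
    moreover have "\<kappa>0 * a^2 \<le> \<kappa>0 * (nI * (\<Sum>k\<in>N. (x$k)^2))"
      unfolding a_def using a2_le kappa0_nonneg by (intro mult_left_mono) auto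
    moreover have "K * (\<mu>' * (\<Sum>k\<in>N. (x$k)^2)) = (K * \<mu>') * (\<Sum>k\<in>N. (x$k)^2)" by simp
    ultimately show ?thesis by (simp add: algebra_simps)
  qed
  have R4: "\<bar>\<Sum>k\<in>N. ((\<mu> k (p k) - \<gamma> k) * uc$k) * x$k\<bar> \<le> Mg * a"
  proof -
    have "\<bar>\<Sum>k\<in>N. ((\<mu> k (p k) - \<gamma> k) * uc$k) * x$k\<bar> \<le> (\<Sum>k\<in>N. \<bar>(\<mu> k (p k) - \<gamma> k) * uc$k\<bar>) * a"
      unfolding a_def by (rule abs_sum_prod_le) simp
    also have "\<dots> \<le> Mg * a"
    proof (intro mult_right_mono a0)
      have "\<bar>(\<mu> k (p k) - \<gamma> k) * uc$k\<bar> \<le> \<bar>\<mu> k (p k) - \<gamma> k\<bar>" for k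
      proof -
        have "uc$k \<le> 1" using member_le_sum[of k UNIV "\<lambda>k. uc$k"] ucp unfolding esum_def by auto
        then show ?thesis using ucp by (simp add: abs_mult mult_left_le)
      qed
      then show "(\<Sum>k\<in>N. \<bar>(\<mu> k (p k) - \<gamma> k) * uc$k\<bar>) \<le> Mg" unfolding Mg_def by (intro sum_mono)
    qed
    finally show ?thesis .
  qed
  have R5: "\<bar>\<Sum>k\<in>N. ell k * x$k\<bar> \<le> Lm * a"
    unfolding Lm_def a_def by (rule abs_sum_prod_le) simp
  have rg: "s > 0 \<longrightarrow> s \<le> \<eta> * a"
  proof
    assume sp: "s > 0"
    have "s \<le> \<delta> * norm x" using reg unfolding s_def by simp
    also have "\<dots> \<le> \<delta> * (s + 2*a)" using norm_le_s_a[of x] sp delta_pos unfolding s_def a_def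
      by (intro mult_left_mono) auto
    finally have "s \<le> \<delta> * s + 2 * \<delta> * a" by (simp add: algebra_simps)
    moreover have "\<delta> \<le> 1/4" unfolding \<delta>_def using eta_props by simp
    moreover have "\<delta> * s \<le> (1/4) * s" using calculation(2) sp by (intro mult_right_mono) auto
    ultimately have "(3/4) * s \<le> 2 * \<delta> * a" by linarith
    then have "s \<le> (8/3) * \<delta> * a" by simp
    also have "\<dots> \<le> \<eta> * a" unfolding \<delta>_def using a0 eta_props by (simp add: mult_right_mono)
    finally show "s \<le> \<eta> * a" .
  qed
  note main = keyineq[OF a0 mum_pos A T1 T2 G L K_pos[THEN order.trans[OF zero_le_one]] R3 kappa0_ge R4 R5
      eta_props rg consts_nonneg(1) consts_nonneg(2) consts_nonneg(3)]
  show ?thesis using main unfolding bq_expr[OF u] s_def a_def uc_def us_def cc_def by simp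
qed

end


lemma W_deriv:
  fixes Q :: "real^'n::finite^'n"
  assumes sym: "transpose Q = Q"
  shows "((\<lambda>x. x \<bullet> (Q *v x)) has_derivative (\<lambda>h. 2 * ((Q *v x) \<bullet> h))) (at x)"
proof -
  have d: "((\<lambda>x. x \<bullet> (Q *v x)) has_derivative (\<lambda>h. x \<bullet> (Q *v h) + h \<bullet> (Q *v x))) (at x)"
    by (intro has_derivative_inner has_derivative_ident bounded_linear_imp_has_derivative matrix_vector_mul_bounded_linear)
  have e: "x \<bullet> (Q *v h) = (Q *v x) \<bullet> h" for h
  proof -
    have "x \<bullet> (Q *v h) = (x v* Q) \<bullet> h" by (simp add: dot_lmul_matrix)
    also have "x v* Q = Q *v x" using vector_transpose_matrix[of x Q] sym by simp
    finally show ?thesis .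
  qed
  show ?thesis by (rule has_derivative_eq_rhs[OF d]) (auto simp: e inner_commute fun_eq_iff)
qed

lemma f_deriv:
  fixes Q :: "real^'n::finite^'n" and m :: real
  assumes sym: "transpose Q = Q" and pos: "x \<bullet> (Q *v x) > 0"
  shows "((\<lambda>x. (x \<bullet> (Q *v x)) powr (m/2)) has_derivative
           (\<lambda>h. ((m * (x \<bullet> (Q *v x)) powr (m/2 - 1)) *\<^sub>R (Q *v x)) \<bullet> h)) (at x)"
proof -
  let ?W = "x \<bullet> (Q *v x)"
  have d: "((\<lambda>x. (x \<bullet> (Q *v x)) powr (m/2)) has_derivative
      (\<lambda>h. ?W powr (m/2) * (0 * ln ?W + 2 * ((Q *v x) \<bullet> h) * (m/2) / ?W))) (at x)"
    by (rule has_derivative_powr[OF W_deriv[OF sym] has_derivative_const pos]) simp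
  have e: "?W powr (m/2) * (0 * ln ?W + 2 * ((Q *v x) \<bullet> h) * (m/2) / ?W)
      = ((m * ?W powr (m/2 - 1)) *\<^sub>R (Q *v x)) \<bullet> h" for h
  proof -
    have pw: "?W powr (m/2 - 1) = ?W powr (m/2) / ?W" using pos by (simp add: powr_diff)
    show ?thesis unfolding pw using pos by (simp add: field_simps)
  qed
  show ?thesis by (rule has_derivative_eq_rhs[OF d]) (rule ext, rule e)
qed

lemma Df_deriv:
  fixes Q :: "real^'n::finite^'n" and m :: real
  assumes sym: "transpose Q = Q" and pos: "x \<bullet> (Q *v x) > 0"
  shows "((\<lambda>x. (m * (x \<bullet> (Q *v x)) powr (m/2 - 1)) *\<^sub>R (Q *v x)) has_derivative
           (\<lambda>h. (m * (x \<bullet> (Q *v x)) powr (m/2 - 1)) *\<^sub>R (Q *v h)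
               + (m * ((x \<bullet> (Q *v x)) powr (m/2 - 1) * (2 * ((Q *v x) \<bullet> h) * (m/2 - 1) / (x \<bullet> (Q *v x))))) *\<^sub>R (Q *v x))) (at x)"
proof -
  let ?W = "x \<bullet> (Q *v x)"
  have p: "((\<lambda>x. (x \<bullet> (Q *v x)) powr (m/2 - 1)) has_derivative
      (\<lambda>h. ?W powr (m/2 - 1) * (0 * ln ?W + 2 * ((Q *v x) \<bullet> h) * (m/2 - 1) / ?W))) (at x)"
    by (rule has_derivative_powr[OF W_deriv[OF sym] has_derivative_const pos]) simp
  have "((\<lambda>x. (m * (x \<bullet> (Q *v x)) powr (m/2 - 1)) *\<^sub>R (Q *v x)) has_derivative
     (\<lambda>h. (m * ?W powr (m/2 - 1)) *\<^sub>R (Q *v h) + (m * (?W powr (m/2 - 1) * (0 * ln ?W + 2 * ((Q *v x) \<bullet> h) * (m/2 - 1) / ?W))) *\<^sub>R (Q *v x))) (at x)"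
    by (intro has_derivative_scaleR has_derivative_mult_right p bounded_linear_imp_has_derivative matrix_vector_mul_bounded_linear)
  then show ?thesis by (rule has_derivative_eq_rhs) (simp add: fun_eq_iff)
qed


lemma identify:
  fixes Q :: "real^'n::finite^'n" and m :: real and V :: "real^'n \<Rightarrow> real"
  assumes sym: "transpose Q = Q" and C2: "C2_with V DV H"
    and Veq: "\<forall>x. norm x \<ge> 1 \<longrightarrow> V x = (x \<bullet> (Q *v x)) powr (m / 2)"
    and posW: "\<forall>x. x \<noteq> 0 \<longrightarrow> x \<bullet> (Q *v x) > 0"
    and x: "norm x > 1"
  shows "DV x = (m * (x \<bullet> (Q *v x)) powr (m/2 - 1)) *\<^sub>R (Q *v x)"
    and "H x $ i $ i = m * (x \<bullet> (Q *v x)) powr (m/2 - 1) * Q$i$i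
          + m * ((x \<bullet> (Q *v x)) powr (m/2 - 1) * (2 * ((Q *v x) $ i) * (m/2 - 1) / (x \<bullet> (Q *v x)))) * (Q *v x) $ i"
proof -
  define S where "S = - cball (0::real^'n) 1"
  have oS: "open S" unfolding S_def by auto
  have inS: "y \<in> S \<longleftrightarrow> norm y > 1" for y unfolding S_def by auto
  let ?Df = "\<lambda>y. (m * (y \<bullet> (Q *v y)) powr (m/2 - 1)) *\<^sub>R (Q *v y)"
  have DVeq: "DV y = ?Df y" if y: "y \<in> S" for y
  proof -
    have "y \<noteq> 0" using y inS by auto
    then have py: "y \<bullet> (Q *v y) > 0" using posW by blast
    have "(V has_derivative (\<lambda>h. DV y \<bullet> h)) (at y)" using C2 unfolding C2_with_def by blast
    then have d1: "((\<lambda>x. (x \<bullet> (Q *v x)) powr (m / 2)) has_derivative (\<lambda>h. DV y \<bullet> h)) (at y)"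
      by (rule has_derivative_transform_within_open[OF _ oS y]) (use Veq inS in force)
    note d2 = f_deriv[OF sym py, of m]
    have "(\<lambda>h. DV y \<bullet> h) = (\<lambda>h. ?Df y \<bullet> h)" by (rule has_derivative_unique[OF d1 d2])
    then have "DV y \<bullet> (DV y - ?Df y) = ?Df y \<bullet> (DV y - ?Df y)" by metis
    then have "(DV y - ?Df y) \<bullet> (DV y - ?Df y) = 0" by (simp add: inner_diff_left)
    then show ?thesis by simp
  qed
  have xS: "x \<in> S" using x inS by simp
  show "DV x = ?Df x" using DVeq[OF xS] .
  have "x \<noteq> 0" using x by auto
  then have px: "x \<bullet> (Q *v x) > 0" using posW by blast
  have "(DV has_derivative (\<lambda>h. H x *v h)) (at x)" using C2 unfolding C2_with_def by blast
  then have d1: "(?Df has_derivative (\<lambda>h. H x *v h)) (at x)"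
    by (rule has_derivative_transform_within_open[OF _ oS xS]) (use DVeq in force)
  note d2 = Df_deriv[OF sym px, of m]
  note eqf = has_derivative_unique[OF d1 d2]
  have "H x *v axis i 1 = (m * (x \<bullet> (Q *v x)) powr (m/2 - 1)) *\<^sub>R (Q *v axis i 1)
               + (m * ((x \<bullet> (Q *v x)) powr (m/2 - 1) * (2 * ((Q *v x) \<bullet> axis i 1) * (m/2 - 1) / (x \<bullet> (Q *v x))))) *\<^sub>R (Q *v x)"
    using fun_cong[OF eqf, of "axis i 1"] by simp
  then have "(H x *v axis i 1) $ i = ((m * (x \<bullet> (Q *v x)) powr (m/2 - 1)) *\<^sub>R (Q *v axis i 1)
               + (m * ((x \<bullet> (Q *v x)) powr (m/2 - 1) * (2 * ((Q *v x) \<bullet> axis i 1) * (m/2 - 1) / (x \<bullet> (Q *v x))))) *\<^sub>R (Q *v x)) $ i"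
    by simp
  then show "H x $ i $ i = m * (x \<bullet> (Q *v x)) powr (m/2 - 1) * Q$i$i
          + m * ((x \<bullet> (Q *v x)) powr (m/2 - 1) * (2 * ((Q *v x) $ i) * (m/2 - 1) / (x \<bullet> (Q *v x)))) * (Q *v x) $ i"
    by (simp add: matrix_vector_mult_basis column_def inner_axis)
qed


lemma final_ineq:
  fixes r W t \<Lambda> m c2 C3 g :: real
  assumes r: "r \<ge> 1" and t: "t > 0" and L: "\<Lambda> > 0" and m: "m \<ge> 1" and c2: "c2 > 0" and C3: "C3 \<ge> 0"
    and Wl: "(t/8) * r^2 \<le> W" and Wu: "W \<le> t*\<Lambda>*r^2"
    and tch: "(m*c2/\<Lambda>) * (t/8) powr (m/2) \<ge> 2"
    and rbig: "r \<ge> 8*m*C3*(t*\<Lambda>) powr (m/2)"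
    and g: "g \<le> m*t*(W powr (m/2-1))*(C3*r - c2*r^2)"
  shows "g \<le> -(r powr m)"
proof -
  have r2p: "r^2 > 0" using r by simp
  have "(t/8)*r^2 > 0" using t r2p by simp
  then have W0: "W > 0" using Wl by linarith
  define A where "A = W powr (m/2)"
  define rm where "rm = r powr m"
  have rmp: "rm > 0" unfolding rm_def using r by simp
  have P: "W powr (m/2-1) = A / W" unfolding A_def using W0 by (simp add: powr_diff)
  have r2m: "(r^2) powr (m/2) = rm"
  proof -
    have "(r^2) powr (m/2) = (r powr 2) powr (m/2)" using r by (simp add: powr_realpow)
    also have "\<dots> = rm" unfolding rm_def by (simp add: powr_powr)
    finally show ?thesis .
  qed
  have Aup: "A \<le> (t*\<Lambda>) powr (m/2) * rm"
  proof -
    have "A \<le> (t*\<Lambda>*r^2) powr (m/2)" unfolding A_def using W0 Wu m by (intro powr_mono2) auto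
    also have "\<dots> = (t*\<Lambda>) powr (m/2) * rm" using t L r2p r2m by (simp add: powr_mult)
    finally show ?thesis .
  qed
  have Alo: "(t/8) powr (m/2) * rm \<le> A"
  proof -
    have "((t/8)*r^2) powr (m/2) \<le> A" unfolding A_def using Wl t r2p m by (intro powr_mono2) auto
    moreover have "((t/8)*r^2) powr (m/2) = (t/8) powr (m/2) * rm"
      using t r2p r2m powr_mult[of "t/8" "r^2" "m/2"] by simp
    ultimately show ?thesis by simp
  qed
  have pos: "m*t*(A/W)*(C3*r) \<le> rm"
  proof -
    have "m*t*(A/W)*(C3*r) = (m*t*C3*r) * A / W" by simp
    also have "\<dots> \<le> (m*t*C3*r) * ((t*\<Lambda>) powr (m/2) * rm) / ((t/8) * r^2)"
    proof -
      have nn: "m*t*C3*r \<ge> 0" using m t C3 r by simp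
      have "(m*t*C3*r) * A \<le> (m*t*C3*r) * ((t*\<Lambda>) powr (m/2) * rm)" using Aup nn by (rule mult_left_mono)
      moreover have "(m*t*C3*r) * ((t*\<Lambda>) powr (m/2) * rm) / W \<le> (m*t*C3*r) * ((t*\<Lambda>) powr (m/2) * rm) / ((t/8) * r^2)"
      proof (rule divide_left_mono[OF Wl])
        show "0 \<le> m*t*C3*r * ((t*\<Lambda>) powr (m/2) * rm)" using nn rmp by simp
        show "0 < W * ((t/8) * r^2)" using W0 t r2p by simp
      qed
      moreover have "(m*t*C3*r) * A / W \<le> (m*t*C3*r) * ((t*\<Lambda>) powr (m/2) * rm) / W"
        using calculation(1) W0 by (intro divide_right_mono) auto
      ultimately show ?thesis by linarith
    qed
    also have "\<dots> = (8*m*C3*(t*\<Lambda>) powr (m/2)) * rm / r" using t r by (simp add: field_simps power2_eq_square)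
    also have "\<dots> \<le> r * rm / r" using rbig rmp r by (intro divide_right_mono mult_right_mono) auto
    also have "\<dots> = rm" using r by simp
    finally show ?thesis .
  qed
  have neg: "m*t*(A/W)*(c2*r^2) \<ge> 2*rm"
  proof -
    have "2*rm \<le> (m*c2/\<Lambda>) * ((t/8) powr (m/2) * rm)" using mult_right_mono[OF tch, of rm] rmp by (simp add: mult.assoc)
    also have "\<dots> \<le> (m*c2/\<Lambda>) * A" using Alo m c2 L by (intro mult_left_mono) auto
    also have "\<dots> = (m*t*c2*r^2) * A / (t*\<Lambda>*r^2)" using t L r2p by (simp add: field_simps)
    also have "\<dots> \<le> (m*t*c2*r^2) * A / W"
    proof (rule divide_left_mono[OF Wu])
      have "0 \<le> A" unfolding A_def by simp
      then show "0 \<le> m*t*c2*r^2 * A" using m t c2 by simp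
      show "0 < t*\<Lambda>*r^2 * W" using W0 t L r2p by simp
    qed
    also have "\<dots> = m*t*(A/W)*(c2*r^2)" by simp
    finally show ?thesis .
  qed
  have "g \<le> m*t*(A/W)*(C3*r) - m*t*(A/W)*(c2*r^2)" using g P by (simp add: right_diff_distrib)
  also have "\<dots> \<le> -rm" using pos neg by linarith
  finally show ?thesis unfolding rm_def .
qed


context net2 begin

definition Qm :: "real \<Rightarrow> real^'i^'i" where
  "Qm t = (\<chi> i k. t * (1 + (if i = k \<and> i \<noteq> i0 then K else 0)))"

lemma Qm_mv: "Qm t *v x = t *\<^sub>R q0 K x"
proof -
  have "(Qm t *v x) $ i = t * (esum x + (if i = i0 then 0 else K * x$i))" for i
  proof -
    have "(Qm t *v x) $ i = (\<Sum>k\<in>UNIV. t * x$k + (if k = i \<and> i \<noteq> i0 then t * K * x$k else 0))"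
      unfolding Qm_def matrix_vector_mult_def by (auto intro!: sum.cong simp: algebra_simps)
    also have "\<dots> = t * esum x + (if i = i0 then 0 else t * K * x$i)"
      unfolding esum_def by (simp add: sum.distrib sum_distrib_left)
    finally show ?thesis by (simp add: algebra_simps)
  qed
  then show ?thesis unfolding q0_def by (simp add: vec_eq_iff)
qed

lemma Qm_sym: "transpose (Qm t) = Qm t"
  unfolding Qm_def transpose_def by (auto simp: vec_eq_iff)

lemma Qm_diag: "Qm t $ i $ i = t * (1 + (if i \<noteq> i0 then K else 0))"
  unfolding Qm_def by simp

lemma W0_eq: "x \<bullet> q0 K x = (esum x)^2 + K * (\<Sum>k\<in>N. (x$k)^2)"
proof -
  have "x \<bullet> q0 K x = (\<Sum>i\<in>UNIV. x$i * esum x + (if i = i0 then 0 else K * (x$i)^2))"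
    unfolding inner_vec_def q0_def by (auto intro!: sum.cong simp: algebra_simps power2_eq_square)
  also have "\<dots> = esum x * esum x + K * (\<Sum>k\<in>N. (x$k)^2)"
  proof -
    have "(\<Sum>i\<in>UNIV. (if i = i0 then 0 else K * (x$i)^2)) = (\<Sum>k\<in>N. K * (x$k)^2)"
      by (subst sum.remove[of UNIV i0]) (auto intro!: sum.cong)
    moreover have "(\<Sum>i\<in>UNIV. x$i * esum x) = esum x * esum x"
      by (simp add: sum_distrib_right[symmetric] esum_def[symmetric])
    ultimately show ?thesis by (simp add: sum.distrib sum_distrib_left)
  qed
  finally show ?thesis by (simp add: power2_eq_square)
qed

lemma r2_le_norm: fixes x :: "real^'i" shows "(\<Sum>k\<in>N. (x$k)^2) \<le> (norm x)^2"
proof -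
  have "(\<Sum>k\<in>N. (x$k)^2) \<le> (\<Sum>k\<in>UNIV. (x$k)^2)" by (intro sum_mono2) auto
  also have "\<dots> = (norm x)^2" unfolding power2_norm_eq_inner inner_vec_def by (simp add: power2_eq_square)
  finally show ?thesis .
qed

lemma norm_sq_le_sa: fixes x :: "real^'i" shows "(norm x)^2 \<le> 8 * ((esum x)^2 + (\<Sum>k\<in>N. \<bar>x$k\<bar>)^2)"
proof -
  define s where "s = esum x"
  define a where "a = (\<Sum>k\<in>N. \<bar>x$k\<bar>)"
  have a0: "a \<ge> 0" unfolding a_def by (auto intro: sum_nonneg)
  have "norm x \<le> \<bar>s\<bar> + 2*a" using norm_le_s_a[of x] unfolding s_def a_def .
  then have "(norm x)^2 \<le> (\<bar>s\<bar> + 2*a)^2" by (intro power_mono) auto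
  also have "\<dots> \<le> 8 * (s^2 + a^2)"
  proof -
    have "0 \<le> (\<bar>s\<bar> - a)^2" by simp
    then have h: "2*(a*\<bar>s\<bar>) \<le> a^2 + s^2" by (simp add: power2_eq_square algebra_simps)
    have eq: "(\<bar>s\<bar> + 2*a)^2 = s^2 + 4*(a*\<bar>s\<bar>) + 4*a^2" by (simp add: power2_eq_square algebra_simps)
    show ?thesis unfolding eq using h zero_le_power2[of s] zero_le_power2[of a] by (smt (verit))
  qed
  finally show ?thesis unfolding s_def a_def .
qed

lemma W0_lower: fixes x :: "real^'i" shows "(norm x)^2 \<le> 8 * (x \<bullet> q0 K x)"
proof -
  have "(\<Sum>k\<in>N. \<bar>x$k\<bar>)^2 \<le> nI * (\<Sum>k\<in>N. (x$k)^2)" by (rule a2_le)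
  also have "\<dots> \<le> K * (\<Sum>k\<in>N. (x$k)^2)" using K_ge by (intro mult_right_mono) (auto intro: sum_nonneg)
  finally have "8 * ((esum x)^2 + (\<Sum>k\<in>N. \<bar>x$k\<bar>)^2) \<le> 8 * ((esum x)^2 + K * (\<Sum>k\<in>N. (x$k)^2))" by simp
  then show ?thesis using norm_sq_le_sa[of x] unfolding W0_eq by linarith
qed

lemma W0_upper: fixes x :: "real^'i" shows "x \<bullet> q0 K x \<le> (nI^2 + K) * (norm x)^2"
proof -
  have "(esum x)^2 \<le> (nI * norm x)^2"
  proof -
    have "\<bar>esum x\<bar> \<le> nI * norm x" by (rule abs_esum_le)
    then have "\<bar>esum x\<bar>^2 \<le> (nI * norm x)^2" by (intro power_mono) auto
    then show ?thesis by simp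
  qed
  moreover have "K * (\<Sum>k\<in>N. (x$k)^2) \<le> K * (norm x)^2" using K_pos r2_le_norm[of x] by (intro mult_left_mono) auto
  ultimately show ?thesis unfolding W0_eq by (simp add: power_mult_distrib algebra_simps)
qed

lemma q0_comp: fixes x :: "real^'i" shows "((q0 K x) $ i)^2 \<le> 2*K * (x \<bullet> q0 K x)"
proof -
  define s where "s = esum x"
  define r2 where "r2 = (\<Sum>k\<in>N. (x$k)^2)"
  have r20: "r2 \<ge> 0" unfolding r2_def by (auto intro: sum_nonneg)
  have xi: "i \<noteq> i0 \<Longrightarrow> (x$i)^2 \<le> r2" unfolding r2_def by (intro member_le_sum) auto
  have "((q0 K x) $ i)^2 \<le> 2 * s^2 + 2 * K^2 * r2"
  proof (cases "i = i0")
    case True then show ?thesis unfolding q0_def s_def using r20 K_pos by simp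
  next
    case False
    have "(s + K * x$i)^2 \<le> 2 * s^2 + 2 * (K * x$i)^2"
    proof -
      have "0 \<le> (s - K * x$i)^2" by simp
      then show ?thesis by (simp add: power2_eq_square algebra_simps)
    qed
    also have "(K * x$i)^2 \<le> K^2 * r2" using xi[OF False] by (simp add: power_mult_distrib mult_left_mono)
    finally show ?thesis using False unfolding q0_def s_def by simp
  qed
  also have "\<dots> \<le> 2*K * (s^2 + K * r2)"
  proof -
    have "s^2 \<le> K * s^2" using K_pos by (simp add: mult_le_cancel_right1)
    then show ?thesis by (simp add: algebra_simps power2_eq_square)
  qed
  finally show ?thesis unfolding W0_eq s_def r2_def .
qed

lemma Qm_posdef: assumes "t > 0" shows "pos_def_mat (Qm t)"
  unfolding pos_def_mat_def
proof (intro conjI allI impI)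
  show "transpose (Qm t) = Qm t" by (rule Qm_sym)
  fix x :: "real^'i" assume "x \<noteq> 0"
  then have "(norm x)^2 > 0" by simp
  then have "x \<bullet> q0 K x > 0" using W0_lower[of x] by linarith
  then show "x \<bullet> (Qm t *v x) > 0" using assms by (simp add: Qm_mv)
qed

end


lemma abs_sum_bound:
  fixes f g :: "'a \<Rightarrow> real"
  assumes "\<And>k. k \<in> A \<Longrightarrow> \<bar>g k\<bar> \<le> Z"
  shows "\<bar>\<Sum>k\<in>A. f k * g k\<bar> \<le> (\<Sum>k\<in>A. \<bar>f k\<bar>) * Z"
proof -
  have "\<bar>\<Sum>k\<in>A. f k * g k\<bar> \<le> (\<Sum>k\<in>A. \<bar>f k\<bar> * \<bar>g k\<bar>)"
    unfolding abs_mult[symmetric] by (rule sum_abs)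
  also have "\<dots> \<le> (\<Sum>k\<in>A. \<bar>f k\<bar> * Z)" using assms by (intro sum_mono mult_left_mono) auto
  finally show ?thesis by (simp add: sum_distrib_right)
qed

context net2 begin

definition "Bc = (1 + nI) * ((\<Sum>j\<in>UNIV. \<bar>\<mu> i0 j\<bar>) + (\<Sum>k\<in>N. \<bar>\<mu> i0 (p k)\<bar>) + (\<Sum>k\<in>N. \<bar>\<mu> k (p k)\<bar>)
    + (\<Sum>i\<in>UNIV. \<bar>\<gamma> i\<bar>) + (\<Sum>i\<in>UNIV. \<bar>ell i\<bar>))"

lemma b_bound:
  fixes x :: "real^'i"
  assumes u: "u \<in> UU"
  shows "\<bar>b x u $ i\<bar> \<le> Bc * (1 + norm x)"
proof -
  define r where "r = norm x"
  define Z where "Z = (1 + nI) * (1 + r)"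
  define s where "s = esum x"
  define uc where "uc = fst u"
  define us where "us = snd u"
  have ucp: "\<forall>i. uc$i \<ge> 0" "esum uc = 1" "\<forall>j. us$j \<ge> 0" "esum us = 1"
    using u unfolding UU_def uc_def us_def by auto
  have uc1: "uc$k \<le> 1" for k using member_le_sum[of k UNIV "\<lambda>k. uc$k"] ucp unfolding esum_def by auto
  have us1: "us$k \<le> 1" for k using member_le_sum[of k UNIV "\<lambda>k. us$k"] ucp unfolding esum_def by auto
  have r0: "r \<ge> 0" unfolding r_def by simp
  have nI1: "nI \<ge> 1" by (rule nI_ge1)
  have xr: "\<bar>x$k\<bar> \<le> r" for k unfolding r_def by (rule component_le_norm_cart)
  have sr: "\<bar>s\<bar> \<le> nI * r" unfolding s_def r_def by (rule abs_esum_le)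
  have Zr: "r \<le> Z" "nI * r \<le> Z" "1 \<le> Z" unfolding Z_def using r0 nI1 by (auto simp: algebra_simps)
  have sp: "\<bar>max s 0\<bar> \<le> Z" "\<bar>max (-s) 0\<bar> \<le> Z" using sr Zr by auto
  have spuc: "\<bar>max s 0 * uc$k\<bar> \<le> Z" for k
  proof -
    have "\<bar>max s 0 * uc$k\<bar> = max s 0 * uc$k" using ucp by simp
    also have "\<dots> \<le> max s 0 * 1" using uc1 ucp by (intro mult_left_mono) auto
    finally have "\<bar>max s 0 * uc$k\<bar> \<le> max s 0" by simp
    moreover have "max s 0 \<le> Z" using sp(1) by simp
    ultimately show ?thesis by linarith
  qed
  have xs: "\<bar>x$k - max s 0 * uc$k\<bar> \<le> Z" for k
  proof -
    have "\<bar>x$k - max s 0 * uc$k\<bar> \<le> \<bar>x$k\<bar> + \<bar>max s 0 * uc$k\<bar>" by (rule abs_triangle_ineq4)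
    also have "\<dots> \<le> r + nI * r"
    proof -
      have "\<bar>max s 0 * uc$k\<bar> \<le> nI * r"
      proof -
        have "\<bar>max s 0 * uc$k\<bar> = max s 0 * uc$k" using ucp by simp
        also have "\<dots> \<le> max s 0 * 1" using uc1 ucp by (intro mult_left_mono) auto
        finally show ?thesis using sr by simp
      qed
      then show ?thesis using xr[of k] by simp
    qed
    also have "\<dots> \<le> Z" unfolding Z_def using r0 nI1 by (simp add: algebra_simps)
    finally show ?thesis .
  qed
  have Zpos: "Z \<ge> 0" using Zr by simp
  define S1 where "S1 = (\<Sum>j\<in>UNIV. \<bar>\<mu> i0 j\<bar>)"
  define S2 where "S2 = (\<Sum>k\<in>N. \<bar>\<mu> i0 (p k)\<bar>)"
  define S3 where "S3 = (\<Sum>k\<in>N. \<bar>\<mu> k (p k)\<bar>)"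
  define S4 where "S4 = (\<Sum>i\<in>UNIV. \<bar>\<gamma> i\<bar>)"
  define S5 where "S5 = (\<Sum>i\<in>UNIV. \<bar>ell i\<bar>)"
  have Sn: "S1 \<ge> 0" "S2 \<ge> 0" "S3 \<ge> 0" "S4 \<ge> 0" "S5 \<ge> 0" unfolding S1_def S2_def S3_def S4_def S5_def
    by (auto intro: sum_nonneg)
  have g4: "\<bar>\<gamma> k\<bar> \<le> S4" for k unfolding S4_def by (rule member_le_sum) auto
  have g5: "\<bar>ell k\<bar> \<le> S5" for k unfolding S5_def by (rule member_le_sum) auto
  have BZ: "Bc * (1 + norm x) = (S1 + S2 + S3 + S4 + S5) * Z"
    unfolding Bc_def Z_def r_def S1_def S2_def S3_def S4_def S5_def by simp
  have gam_t: "\<bar>\<gamma> k * max s 0 * uc$k\<bar> \<le> S4 * Z" for k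
  proof -
    have "\<bar>\<gamma> k * max s 0 * uc$k\<bar> = \<bar>\<gamma> k\<bar> * \<bar>max s 0 * uc$k\<bar>" by (simp add: abs_mult)
    also have "\<dots> \<le> S4 * Z" using g4 spuc Sn by (intro mult_mono) auto
    finally show ?thesis .
  qed
  have ell_t: "\<bar>ell k\<bar> \<le> S5 * Z" for k
  proof -
    have "S5 * 1 \<le> S5 * Z" using Zr(3) Sn(5) by (intro mult_left_mono) auto
    then show ?thesis using g5[of k] by simp
  qed
  show ?thesis
  proof (cases "i = i0")
    case False
    have bo: "b x u $ i = - \<mu> i (p i) * (x$i - max s 0 * uc$i) - \<gamma> i * max s 0 * uc$i + ell i"
      using drift_off[OF u False, where x=x and \<mu>=\<mu> and \<gamma>=\<gamma> and ell=ell]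
      unfolding s_def uc_def posp_def by simp
    have m3: "\<bar>\<mu> i (p i)\<bar> \<le> S3" unfolding S3_def using False by (intro member_le_sum) auto
    have "\<bar>\<mu> i (p i) * (x$i - max s 0 * uc$i)\<bar> \<le> S3 * Z"
      unfolding abs_mult using m3 xs Sn by (intro mult_mono) auto
    then have "\<bar>b x u $ i\<bar> \<le> S3 * Z + S4 * Z + S5 * Z"
      unfolding bo using gam_t[of i] ell_t[of i] by linarith
    also have "\<dots> \<le> (S1 + S2 + S3 + S4 + S5) * Z" using Sn Zpos by (simp add: algebra_simps)
    finally show ?thesis using BZ by simp
  next
    case True
    have bi: "b x u $ i0 = max (-s) 0 * (\<Sum>j\<in>UNIV. \<mu> i0 j * us$j)
            + (\<Sum>k\<in>N. \<mu> i0 (p k) * (x$k - max s 0 * uc$k)) - \<gamma> i0 * max s 0 * uc$i0 + ell i0"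
      using drift_on[OF u, where x=x and \<mu>=\<mu> and \<gamma>=\<gamma> and ell=ell]
      unfolding s_def uc_def us_def posp_def negp_def by simp
    have A1: "\<bar>\<Sum>j\<in>UNIV. \<mu> i0 j * us$j\<bar> \<le> S1 * 1" unfolding S1_def
      by (rule abs_sum_bound) (use ucp us1 in auto)
    have t1: "\<bar>max (-s) 0 * (\<Sum>j\<in>UNIV. \<mu> i0 j * us$j)\<bar> \<le> Z * S1"
      unfolding abs_mult using sp(2) A1 Sn Zpos by (intro mult_mono) auto
    have t2: "\<bar>\<Sum>k\<in>N. \<mu> i0 (p k) * (x$k - max s 0 * uc$k)\<bar> \<le> S2 * Z" unfolding S2_def
      by (rule abs_sum_bound) (rule xs)
    have "\<bar>b x u $ i0\<bar> \<le> Z * S1 + S2 * Z + S4 * Z + S5 * Z"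
      unfolding bi using t1 t2 gam_t[of i0] ell_t[of i0] by linarith
    also have "\<dots> \<le> (S1 + S2 + S3 + S4 + S5) * Z" using Sn Zpos by (simp add: algebra_simps)
    finally show ?thesis using BZ True by simp
  qed
qed

end


context net2 begin

definition "C4 m = 1 + K + 2*K*\<bar>m - 2\<bar>"
definition "CL = L1 + K*Lm"
definition "C3 lam m = (\<Sum>i\<in>UNIV. lam i) * C4 m + 2 * nI * CL"
definition "c2 = cc/8"
definition "\<Lambda> = nI^2 + K"
definition "tt m = 8 * max 1 ((2*\<Lambda>/(m*c2))^2)"
definition "RR lam m = max 2 (8*m*C3 lam m*(tt m*\<Lambda>) powr (m/2))"

lemma cc_pos: "cc > 0" unfolding cc_def using mum_pos by simp
lemma c2_pos: "c2 > 0" unfolding c2_def using cc_pos by simp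
lemma Lam_pos: "\<Lambda> > 0" unfolding \<Lambda>_def using K_pos zero_le_power2[of nI] by linarith

lemma tt_props: assumes m: "m \<ge> 1" shows "tt m > 0" "(m*c2/\<Lambda>) * (tt m/8) powr (m/2) \<ge> 2"
proof -
  define z where "z = 2*\<Lambda>/(m*c2)"
  have zp: "z > 0" unfolding z_def using m c2_pos Lam_pos by simp
  have t8: "tt m / 8 = max 1 (z^2)" unfolding tt_def z_def by simp
  show "tt m > 0" unfolding tt_def by simp
  have "(tt m/8) powr (1/2) \<le> (tt m/8) powr (m/2)" unfolding t8 using m by (intro powr_mono) auto
  moreover have "(tt m/8) powr (1/2) = sqrt (max 1 (z^2))" unfolding t8 by (simp add: powr_half_sqrt)
  moreover have "sqrt (max 1 (z^2)) \<ge> z" using zp by (metis max.cobounded2 real_sqrt_abs real_sqrt_le_mono abs_of_pos)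
  ultimately have "z \<le> (tt m/8) powr (m/2)" by linarith
  then have "(m*c2/\<Lambda>) * z \<le> (m*c2/\<Lambda>) * (tt m/8) powr (m/2)"
    using m c2_pos Lam_pos by (intro mult_left_mono) auto
  moreover have "(m*c2/\<Lambda>) * z = 2" unfolding z_def using m c2_pos Lam_pos by simp
  ultimately show "(m*c2/\<Lambda>) * (tt m/8) powr (m/2) \<ge> 2" by simp
qed

lemma gen_large:
  fixes x :: "real^'i" and lam :: "'i \<Rightarrow> real" and m :: real
  assumes lam: "\<forall>i. lam i > 0" and m: "m \<ge> 1"
    and C2: "C2_with V DV H"
    and Veq: "\<forall>x. norm x \<ge> 1 \<longrightarrow> V x = (x \<bullet> (Qm (tt m) *v x)) powr (m / 2)"
    and xR: "norm x \<ge> RR lam m" and u: "u \<in> UU" and reg: "\<not> (esum x > \<delta> * norm x)"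
  shows "ctrl_gen lam b DV H x u \<le> -(norm x powr m)"
proof -
  define t where "t = tt m"
  define Q where "Q = Qm t"
  define r where "r = norm x"
  define W0 where "W0 = x \<bullet> q0 K x"
  define W where "W = x \<bullet> (Q *v x)"
  define P where "P = W powr (m/2 - 1)"
  have t0: "t > 0" unfolding t_def using tt_props[OF m] by simp
  have r2: "r \<ge> 2" unfolding r_def using xR unfolding RR_def by simp
  have r1: "r \<ge> 1" "norm x > 1" using r2 unfolding r_def by auto
  have Qmv: "Q *v y = t *\<^sub>R q0 K y" for y unfolding Q_def by (rule Qm_mv)
  have WW0: "W = t * W0" unfolding W_def W0_def Qmv by simp
  have sym: "transpose Q = Q" unfolding Q_def by (rule Qm_sym)
  have posW: "\<forall>y. y \<noteq> 0 \<longrightarrow> y \<bullet> (Q *v y) > 0" using Qm_posdef[OF t0] unfolding pos_def_mat_def Q_def by blast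
  have Veq': "\<forall>x. norm x \<ge> 1 \<longrightarrow> V x = (x \<bullet> (Q *v x)) powr (m / 2)" using Veq unfolding Q_def t_def .
  note DVx = identify(1)[OF sym C2 Veq' posW r1(2)]
  note Hx = identify(2)[OF sym C2 Veq' posW r1(2)]
  have W0l: "r^2 \<le> 8 * W0" unfolding r_def W0_def by (rule W0_lower)
  have W0u: "W0 \<le> \<Lambda> * r^2" unfolding r_def W0_def \<Lambda>_def by (rule W0_upper)
  have W0p: "W0 > 0" using W0l r1 by (smt (verit) one_le_power)
  have Wp: "W > 0" using WW0 W0p t0 by simp
  have P0: "P \<ge> 0" unfolding P_def by simp
  have m0: "m \<ge> 0" using m by simp
  have K1: "K \<ge> 1" by (rule K_pos)
  have Hb: "H x $ i $ i \<le> m * P * (t * C4 m)" for i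
  proof -
    have eq: "H x $ i $ i = m * P * (Q$i$i + (m - 2) * (((Q *v x) $ i)^2 / W))"
      unfolding Hx W_def[symmetric] P_def[symmetric] using Wp by (simp add: field_simps power2_eq_square)
    have q1: "Q$i$i \<le> t * (1 + K)" unfolding Q_def Qm_diag using t0 K1 by (auto simp: mult_left_mono)
    have q2: "((Q *v x) $ i)^2 / W \<le> t * (2*K)"
    proof -
      have "((Q *v x) $ i)^2 = t^2 * ((q0 K x) $ i)^2" unfolding Qmv by (simp add: power_mult_distrib)
      also have "\<dots> \<le> t^2 * (2*K*W0)" using q0_comp[of x i] unfolding W0_def by (intro mult_left_mono) auto
      finally have "((Q *v x) $ i)^2 \<le> (t * (2*K)) * W" unfolding WW0 by (simp add: power2_eq_square algebra_simps)
      then show ?thesis using Wp by (simp add: divide_le_eq)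
    qed
    have q20: "((Q *v x) $ i)^2 / W \<ge> 0" using Wp by simp
    have "(m - 2) * (((Q *v x) $ i)^2 / W) \<le> \<bar>m - 2\<bar> * (t * (2*K))"
    proof -
      have "(m - 2) * (((Q *v x) $ i)^2 / W) \<le> \<bar>m - 2\<bar> * (((Q *v x) $ i)^2 / W)" using q20 by (intro mult_right_mono) auto
      also have "\<dots> \<le> \<bar>m - 2\<bar> * (t * (2*K))" using q2 by (intro mult_left_mono) auto
      finally show ?thesis .
    qed
    then have "Q$i$i + (m - 2) * (((Q *v x) $ i)^2 / W) \<le> t * C4 m"
      using q1 unfolding C4_def by (simp add: algebra_simps)
    then show ?thesis unfolding eq using m0 P0 by (intro mult_left_mono) auto
  qed
  have Hsum: "(\<Sum>i\<in>UNIV. lam i * H x $ i $ i) \<le> m * P * t * (C4 m * (\<Sum>i\<in>UNIV. lam i))"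
  proof -
    have "(\<Sum>i\<in>UNIV. lam i * H x $ i $ i) \<le> (\<Sum>i\<in>UNIV. lam i * (m * P * (t * C4 m)))"
      using lam Hb by (intro sum_mono mult_left_mono) (auto simp: less_imp_le)
    also have "\<dots> = m * P * t * (C4 m * (\<Sum>i\<in>UNIV. lam i))" by (simp add: sum_distrib_left sum_distrib_right algebra_simps)
    finally show ?thesis .
  qed
  define s where "s = esum x"
  define a where "a = (\<Sum>k\<in>N. \<bar>x$k\<bar>)"
  have bq: "b x u \<bullet> q0 K x \<le> -cc*(s^2+a^2) + CL*(\<bar>s\<bar>+a)"
    using drift_bound[OF u reg] unfolding s_def a_def CL_def .
  have bq2: "b x u \<bullet> q0 K x \<le> -c2 * r^2 + (2 * nI * CL) * r"
  proof -
    have "r^2 \<le> 8*(s^2+a^2)" unfolding r_def s_def a_def by (rule norm_sq_le_sa)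
    then have "cc * r^2 \<le> cc * (8*(s^2+a^2))" using cc_pos by (intro mult_left_mono) auto
    then have "-cc*(s^2+a^2) \<le> -c2 * r^2" unfolding c2_def by (simp add: field_simps)
    moreover have "\<bar>s\<bar> + a \<le> 2 * nI * r"
      using abs_esum_le[of x] sum_abs_le_nI[of x N] unfolding s_def a_def r_def by simp
    moreover have "CL \<ge> 0" unfolding CL_def using consts_nonneg K1 by simp
    ultimately have "CL*(\<bar>s\<bar>+a) \<le> CL * (2 * nI * r)" by (intro mult_left_mono) auto
    then show ?thesis using bq \<open>-cc*(s^2+a^2) \<le> -c2 * r^2\<close> by (simp add: algebra_simps)
  qed
  have bDV: "b x u \<bullet> DV x = m * P * t * (b x u \<bullet> q0 K x)"
    unfolding DVx Qmv P_def W_def by (simp add: inner_scaleR_right algebra_simps)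
  have Ls0: "(\<Sum>i\<in>UNIV. lam i) \<ge> 0" using lam by (auto intro: sum_nonneg less_imp_le)
  have C40: "C4 m \<ge> 0" unfolding C4_def using K1 by simp
  have mPt: "m * P * t \<ge> 0" using m0 P0 t0 by simp
  have gen: "ctrl_gen lam b DV H x u \<le> m * t * (W powr (m/2-1)) * (C3 lam m * r - c2 * r^2)"
  proof -
    have "ctrl_gen lam b DV H x u \<le> m * P * t * (C4 m * (\<Sum>i\<in>UNIV. lam i)) + m * P * t * (-c2 * r^2 + (2 * nI * CL) * r)"
      unfolding ctrl_gen_def bDV using Hsum mult_left_mono[OF bq2 mPt] by linarith
    also have "\<dots> = m * P * t * (C4 m * (\<Sum>i\<in>UNIV. lam i) + 2 * nI * CL * r - c2 * r^2)" by (simp add: algebra_simps)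
    also have "\<dots> \<le> m * P * t * (C3 lam m * r - c2 * r^2)"
    proof (intro mult_left_mono mPt)
      have "C4 m * (\<Sum>i\<in>UNIV. lam i) \<le> C4 m * (\<Sum>i\<in>UNIV. lam i) * r"
        using mult_left_mono[OF r1(1), of "C4 m * (\<Sum>i\<in>UNIV. lam i)"] C40 Ls0 by simp
      then show "C4 m * (\<Sum>i\<in>UNIV. lam i) + 2 * nI * CL * r - c2 * r^2 \<le> C3 lam m * r - c2 * r^2"
        unfolding C3_def by (simp add: algebra_simps)
    qed
    finally show ?thesis unfolding P_def by (simp add: algebra_simps)
  qed
  have C30: "C3 lam m \<ge> 0" unfolding C3_def CL_def using Ls0 C40 consts_nonneg K1 nI_ge1 by simp
  show ?thesis unfolding r_def[symmetric]
  proof (rule final_ineq[OF r1(1) t0 Lam_pos m c2_pos C30 _ _ _ _ gen])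
    show "t / 8 * r^2 \<le> W" unfolding WW0 using W0l t0 by (simp add: field_simps)
    show "W \<le> t * \<Lambda> * r^2" unfolding WW0 using W0u t0 by (simp add: mult_left_mono mult.assoc)
    show "2 \<le> m * c2 / \<Lambda> * (t / 8) powr (m / 2)" unfolding t_def using tt_props[OF m] by simp
    show "8 * m * C3 lam m * (t * \<Lambda>) powr (m / 2) \<le> r" using xR unfolding RR_def t_def r_def by simp
  qed
qed

end


context net2 begin

lemma compact_bound:
  fixes lam :: "'i \<Rightarrow> real" and R :: real
  assumes lam: "\<forall>i. lam i > 0" and C2: "C2_with V DV H"
  shows "\<exists>M. \<forall>x. \<forall>u\<in>UU. norm x \<le> R \<longrightarrow> ctrl_gen lam b DV H x u \<le> M"
proof -
  have cH: "continuous_on (cball 0 R) H" using C2 unfolding C2_with_def by (auto intro: continuous_on_subset)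
  have "bounded (H ` cball 0 R)" by (rule compact_imp_bounded[OF compact_continuous_image[OF cH compact_cball]])
  then obtain B1 where B1: "\<forall>y\<in>H ` cball 0 R. norm y \<le> B1" unfolding bounded_iff by blast
  have "isCont DV x" for x
    using C2 unfolding C2_with_def by (meson has_derivative_continuous)
  then have cD: "continuous_on (cball 0 R) DV" by (simp add: continuous_at_imp_continuous_on)
  have "bounded (DV ` cball 0 R)" by (rule compact_imp_bounded[OF compact_continuous_image[OF cD compact_cball]])
  then obtain B2 where B2: "\<forall>y\<in>DV ` cball 0 R. norm y \<le> B2" unfolding bounded_iff by blast
  define M where "M = (\<Sum>i\<in>UNIV. lam i * B1) + (\<Sum>i\<in>(UNIV::'i set). Bc * (1 + R) * B2)"
  show ?thesis
  proof (intro exI allI ballI impI)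
    fix x :: "real^'i" and u :: "(real^'i) \<times> (real^'j)" assume u: "u \<in> UU" and xR: "norm x \<le> R"
    have xc: "x \<in> cball 0 R" using xR by simp
    have Hn: "norm (H x) \<le> B1" using B1 xc by blast
    have Dn: "norm (DV x) \<le> B2" using B2 xc by blast
    have t1: "(\<Sum>i\<in>UNIV. lam i * H x $ i $ i) \<le> (\<Sum>i\<in>UNIV. lam i * B1)"
    proof (intro sum_mono mult_left_mono)
      fix i
      have "H x $ i $ i \<le> \<bar>H x $ i $ i\<bar>" by simp
      also have "\<dots> \<le> norm (H x $ i)" by (rule component_le_norm_cart)
      also have "\<dots> \<le> norm (H x)" by (rule Finite_Cartesian_Product.norm_nth_le)
      finally show "H x $ i $ i \<le> B1" using Hn by simp
      show "0 \<le> lam i" using lam less_imp_le by blast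
    qed
    have t2: "b x u \<bullet> DV x \<le> (\<Sum>i\<in>(UNIV::'i set). Bc * (1 + R) * B2)"
      unfolding inner_vec_def inner_real_def
    proof (intro sum_mono)
      fix i :: 'i assume "i \<in> UNIV"
      have "b x u $ i * DV x $ i \<le> \<bar>b x u $ i\<bar> * \<bar>DV x $ i\<bar>" by (simp add: abs_mult[symmetric])
      also have "\<dots> \<le> (Bc * (1 + R)) * B2"
      proof (rule mult_mono)
        have "\<bar>b x u $ i\<bar> \<le> Bc * (1 + norm x)" by (rule b_bound[OF u])
        also have "\<dots> \<le> Bc * (1 + R)"
        proof (rule mult_left_mono)
          show "1 + norm x \<le> 1 + R" using xR by simp
          show "0 \<le> Bc" using b_bound[OF u, of x i] by (smt (verit) abs_ge_zero norm_ge_zero zero_le_mult_iff)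
        qed
        finally show "\<bar>b x u $ i\<bar> \<le> Bc * (1 + R)" .
        show "\<bar>DV x $ i\<bar> \<le> B2" using component_le_norm_cart[of "DV x" i] Dn by simp
        show "0 \<le> Bc * (1 + R)" using \<open>\<bar>b x u $ i\<bar> \<le> Bc * (1 + R)\<close> by linarith
      qed simp
      finally show "b x u $ i * DV x $ i \<le> Bc * (1 + R) * B2" .
    qed
    show "ctrl_gen lam b DV H x u \<le> M" unfolding ctrl_gen_def M_def using t1 t2 by linarith
  qed
qed

end

theorem corollary4p2:
  fixes E :: "'i::finite \<Rightarrow> 'j::finite \<Rightarrow> bool"
    and lam \<gamma> ell :: "'i \<Rightarrow> real"
    and \<mu> :: "'i \<Rightarrow> 'j \<Rightarrow> real"
    and m :: real
  assumes tree: "bip_tree E"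
    and lam: "\<forall>i. lam i > 0"
    and gam: "\<forall>i. \<gamma> i \<ge> 0"
    and mu_pos: "\<forall>i j. E i j \<longrightarrow> \<mu> i j > 0"
    and mu_zero: "\<forall>i j. \<not> E i j \<longrightarrow> \<mu> i j = 0"
    and one_branch: "card {i. card {j. E i j} > 1} \<le> 1"
    and m: "m \<ge> 1"
  shows "\<exists>\<delta> > 0. \<exists>Q :: real^'i^'i. pos_def_mat Q \<and>
           (\<forall>V DV H. C2_with V DV H
              \<and> (\<forall>x. norm x \<ge> 1 \<longrightarrow> V x = (x \<bullet> (Q *v x)) powr (m / 2))
              \<longrightarrow> (\<exists>\<kappa> > 0. \<forall>x. \<forall>u\<in>UU.
                     \<not> (esum x > \<delta> * norm x) \<longrightarrow>
                     ctrl_gen lam (drift E \<mu> \<gamma> ell) DV H x u \<le> \<kappa> - norm x powr m))"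
proof -
  obtain i0 where full: "\<forall>j. E i0 j" and single: "\<forall>i. i \<noteq> i0 \<longrightarrow> card {j. E i j} = 1"
    using tree_struct[OF tree one_branch] by blast
  interpret net2 E i0 \<mu> \<gamma> ell
    by unfold_locales (use full single mu_pos gam in auto)
  have pd: "pos_def_mat (Qm (tt m))" by (rule Qm_posdef[OF tt_props(1)[OF m]])
  have main: "\<forall>V DV H. C2_with V DV H
              \<and> (\<forall>x. norm x \<ge> 1 \<longrightarrow> V x = (x \<bullet> (Qm (tt m) *v x)) powr (m / 2))
              \<longrightarrow> (\<exists>\<kappa> > 0. \<forall>x. \<forall>u\<in>UU.
                     \<not> (esum x > \<delta> * norm x) \<longrightarrow>
                     ctrl_gen lam (drift E \<mu> \<gamma> ell) DV H x u \<le> \<kappa> - norm x powr m)"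
  proof (intro allI impI)
    fix V DV H
    assume h: "C2_with V DV H \<and> (\<forall>x. norm x \<ge> 1 \<longrightarrow> V x = (x \<bullet> (Qm (tt m) *v x)) powr (m / 2))"
    define R where "R = RR lam m"
    obtain M where M: "\<forall>x. \<forall>u\<in>UU. norm x \<le> R \<longrightarrow> ctrl_gen lam b DV H x u \<le> M"
      using compact_bound[OF lam, of V DV H R] h by blast
    define \<kappa> where "\<kappa> = max 1 (M + R powr m)"
    have kp: "\<kappa> > 0" unfolding \<kappa>_def by simp
    have "\<forall>x. \<forall>u\<in>UU. \<not> (esum x > \<delta> * norm x) \<longrightarrow>
              ctrl_gen lam (drift E \<mu> \<gamma> ell) DV H x u \<le> \<kappa> - norm x powr m"
    proof (intro allI ballI impI)
      fix x :: "real^'i" and u :: "(real^'i) \<times> (real^'j)" assume u: "u \<in> UU" and reg: "\<not> (esum x > \<delta> * norm x)"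
      show "ctrl_gen lam (drift E \<mu> \<gamma> ell) DV H x u \<le> \<kappa> - norm x powr m"
      proof (cases "norm x \<ge> R")
        case True
        have "ctrl_gen lam b DV H x u \<le> -(norm x powr m)"
          using gen_large[OF lam m _ _ _ u reg] h True unfolding R_def by blast
        moreover have "\<kappa> \<ge> 0" unfolding \<kappa>_def by simp
        ultimately show ?thesis by simp
      next
        case False
        have "ctrl_gen lam b DV H x u \<le> M" using M u False by auto
        moreover have "norm x powr m \<le> R powr m" using False m by (intro powr_mono2) auto
        moreover have "M + R powr m \<le> \<kappa>" unfolding \<kappa>_def by simp
        ultimately show ?thesis by simp
      qed
    qed
    then show "\<exists>\<kappa> > 0. \<forall>x. \<forall>u\<in>UU. \<not> (esum x > \<delta> * norm x) \<longrightarrow>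
              ctrl_gen lam (drift E \<mu> \<gamma> ell) DV H x u \<le> \<kappa> - norm x powr m" using kp by blast
  qed
  show ?thesis using delta_pos pd main by blast
qed


end
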